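(* Let $\tilde a,\tilde b,\tilde c,\tilde d>0$, $\tilde p\in(4,\infty)$, $\tilde q\in(0,2)$, and $f(t)=\tilde at^2+\tilde bt^4-\tilde ct^{\tilde p}-\tilde dt^{\tilde q}$ for $t\ge0$. Put $X=\frac{8(4-\tilde q)}{\tilde p(\tilde p-2)(\tilde p-\tilde q)}$. If $$\Big[X^{\frac{4-\tilde q}{\tilde p-4}}-X^{\frac{\tilde p-\tilde q}{\tilde p-4}}\Big]\Big[\frac{\tilde a}{\tilde d}\Big(\frac{\tilde b}{\tilde c}\Big)^{\frac{2-\tilde q}{\tilde p-4}}+\frac1{\tilde d}\frac{\tilde b^{\frac{\tilde p-\tilde q}{\tilde p-4}}}{\tilde c^{\frac{4-\tilde q}{\tilde p-4}}}\Big]>1,$$ then $f$ has on $[0,\infty)$ a local strict minimum at a negative level and a global strict maximum at a positive level. *)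

theory Defs
  imports Complex_Main
begin

definition strict_local_min_on :: "(real \<Rightarrow> real) \<Rightarrow> real set \<Rightarrow> real \<Rightarrow> bool" where
  "strict_local_min_on g S x0 \<longleftrightarrow> x0 \<in> S \<and>
     (\<exists>e>0. \<forall>x\<in>S. x \<noteq> x0 \<and> \<bar>x - x0\<bar> < e \<longrightarrow> g x0 < g x)"

definition strict_global_max_on :: "(real \<Rightarrow> real) \<Rightarrow> real set \<Rightarrow> real \<Rightarrow> bool" where
  "strict_global_max_on g S x0 \<longleftrightarrow> x0 \<in> S \<and> (\<forall>x\<in>S. x \<noteq> x0 \<longrightarrow> g x < g x0)"

end

theory Submission
  imports Defs
begin


lemma pm: "0 < (t::real) \<Longrightarrow> a + b = c \<Longrightarrow> t powr a * t powr b = t powr c"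
  by (simp add: powr_add[symmetric])

lemma K_prop:
  fixes A B C p x y :: real
  assumes "A > 0" "B > 0" "C > 0" "p > 4" "0 < x" "x < y"
    and "A + B*x^2 - C*x powr (p-2) \<le> 0"
  shows "A + B*y^2 - C*y powr (p-2) < 0"
proof -
  have e: "t powr (p-2) = t^2 * t powr (p-4)" if "t > 0" for t :: real
    using pm[of t 2 "p-4" "p-2"] that by simp
  define g where "g t = B - C * t powr (p-4)" for t
  have Kx: "A + x^2 * g x \<le> 0" using assms(7) e[OF assms(5)] by (simp add: g_def algebra_simps)
  have gx: "g x < 0"
  proof (rule ccontr)
    assume "\<not> g x < 0" then have "x^2 * g x \<ge> 0" by simp
    with Kx assms(1) show False by linarith
  qed
  have "x powr (p-4) < y powr (p-4)" using assms by (intro powr_less_mono2) auto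
  then have gy: "g y < g x" using assms(3) by (simp add: g_def)
  have "y^2 * g y < y^2 * g x" using gy assms by simp
  also have "\<dots> < x^2 * g x" using gx assms by (intro mult_strict_right_mono_neg power_strict_mono) auto
  finally have "A + y^2 * g y < 0" using Kx by linarith
  then show ?thesis using e[of y] assms by (simp add: g_def algebra_simps)
qed

lemma H_deriv:
  fixes a b c d p q t :: real
  assumes "t > 0"
  shows "((\<lambda>t. 2*a*t powr (2-q) + 4*b*t powr (4-q) - c*p*t powr (p-q) - d*q) has_real_derivative
          t powr (1-q) * (2*a*(2-q) + 4*b*(4-q)*t^2 - c*p*(p-q)*t powr (p-2))) (at t)"
proof -
  have "((\<lambda>t. 2*a*t powr (2-q) + 4*b*t powr (4-q) - c*p*t powr (p-q) - d*q) has_real_derivative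
     2*a*((2-q)*t powr (2-q-1)) + 4*b*((4-q)*t powr (4-q-1)) - c*p*((p-q)*t powr (p-q-1)) - 0) (at t)"
    by (intro DERIV_diff DERIV_add DERIV_cmult DERIV_const has_real_derivative_powr assms)
  moreover have e: "t powr (4-q-1) = t powr (1-q) * t^2" "t powr (p-q-1) = t powr (1-q) * t powr (p-2)"
    "t powr (2-q-1) = t powr (1-q)"
    using assms pm[of t "1-q" 2 "4-q-1"] pm[of t "1-q" "p-2" "p-q-1"] by simp_all
  ultimately have "((\<lambda>t. 2*a*t powr (2-q) + 4*b*t powr (4-q) - c*p*t powr (p-q) - d*q) has_real_derivative
     2*a*((2-q)*t powr (1-q)) + 4*b*((4-q)*(t powr (1-q) * t^2)) - c*p*((p-q)*(t powr (1-q) * t powr (p-2))) - 0) (at t)"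
    by simp
  then show ?thesis by (simp add: algebra_simps)
qed

lemma F_deriv:
  fixes a b c d p q t :: real
  assumes "t > 0"
  shows "((\<lambda>t. a * t^2 + b * t^4 - c * t powr p - d * t powr q) has_real_derivative
          t powr (q-1) * (2*a*t powr (2-q) + 4*b*t powr (4-q) - c*p*t powr (p-q) - d*q)) (at t)"
proof -
  have "((\<lambda>t. a * t^2 + b * t^4 - c * t powr p - d * t powr q) has_real_derivative
     a*(2*t) + b*(4*t^3) - c*(p*t powr (p-1)) - d*(q*t powr (q-1))) (at t)"
    by (intro derivative_eq_intros has_real_derivative_powr assms) auto
  moreover have e: "t powr (q-1) * t powr (2-q) = t" "t powr (q-1) * t powr (4-q) = t^3"
     "t powr (q-1) * t powr (p-q) = t powr (p-1)"
    using assms pm[of t "q-1" "2-q" 1] pm[of t "q-1" "4-q" 3] pm[of t "q-1" "p-q" "p-1"] by simp_all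
  moreover have "t powr (q-1) * (2*a*t powr (2-q) + 4*b*t powr (4-q) - c*p*t powr (p-q) - d*q)
     = 2*a*(t powr (q-1) * t powr (2-q)) + 4*b*(t powr (q-1) * t powr (4-q)) - c*p*(t powr (q-1) * t powr (p-q)) - d*q*t powr (q-1)"
    by (simp add: algebra_simps)
  ultimately show ?thesis by (simp add: algebra_simps)
qed


lemma Hqc:
  fixes H K :: "real \<Rightarrow> real"
  assumes Hd: "\<And>t. t > 0 \<Longrightarrow> (H has_real_derivative t powr r * K t) (at t)"
    and Kneg: "\<And>x y. 0 < x \<Longrightarrow> x < y \<Longrightarrow> K x \<le> 0 \<Longrightarrow> K y < 0"
    and xyz: "0 < x" "x < y" "y < z"
  shows "H y > min (H x) (H z)"
proof (rule ccontr)
  assume "\<not> H y > min (H x) (H z)"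
  then have h1: "H y \<le> H x" and h2: "H y \<le> H z" by auto
  obtain u where u: "x < u" "u < y" "H y - H x = (y - x) * (u powr r * K u)"
    using MVT2[of x y H "\<lambda>t. t powr r * K t"] xyz Hd by force
  obtain v where v: "y < v" "v < z" "H z - H y = (z - y) * (v powr r * K v)"
    using MVT2[of y z H "\<lambda>t. t powr r * K t"] xyz Hd by force
  have "(y - x) * (u powr r * K u) \<le> 0" using u h1 by linarith
  then have "u powr r * K u \<le> 0" using xyz by (simp add: mult_le_0_iff)
  then have "K u \<le> 0" using u xyz by (simp add: mult_le_0_iff)
  then have "K v < 0" using Kneg[of u v] u v xyz by linarith
  then have "v powr r * K v < 0" using v xyz by (simp add: mult_less_0_iff)
  then have "(z - y) * (v powr r * K v) < 0" using v by (simp add: mult_less_0_iff)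
  then show False using v h2 by linarith
qed



lemma pos_point:
  fixes a b c d p q X :: real
  assumes "a > 0" "b > 0" "c > 0" "d > 0"
    and "p > 4" "q > 0" "q < 2"
    and X_def: "X = 8 * (4 - q) / (p * (p - 2) * (p - q))"
    and cond: "(X powr ((4 - q) / (p - 4)) - X powr ((p - q) / (p - 4))) *
               (a / d * (b / c) powr ((2 - q) / (p - 4))
                + 1 / d * (b powr ((p - q) / (p - 4)) / c powr ((4 - q) / (p - 4)))) > 1"
  shows "\<exists>s>0. a*s^2 + b*s^4 - c*s powr p - d*s powr q > 0"
proof -
  define al where "al = (4 - q) / (p - 4)"
  define ga where "ga = (2 - q) / (p - 4)"
  have be: "(p - q) / (p - 4) = al + 1" using assms by (simp add: al_def field_simps)
  have gal: "ga < al" using assms by (simp add: al_def ga_def divide_strict_right_mono)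
  have "4 * 2 < p * (p - 2)" using assms by (intro mult_strict_mono) auto
  then have p8: "p * (p - 2) > 8" by simp
  have Xpos: "X > 0" using assms by (simp add: X_def)
  have "8 * (4 - q) < p * (p - 2) * (p - q)"
    using p8 assms by (intro mult_strict_mono) auto
  then have X1: "X < 1" using assms p8 by (simp add: X_def)
  define Bg where "Bg = (b/c) powr ga"
  define Ba where "Ba = (b/c) powr al"
  define Xa where "Xa = X powr al"
  have Bgp: "Bg > 0" "Ba > 0" "Xa > 0" using assms Xpos by (auto simp: Bg_def Ba_def Xa_def)
  have c1: "b powr ((p - q) / (p - 4)) / c powr ((4 - q) / (p - 4)) = b * Ba"
    using assms unfolding be Ba_def al_def[symmetric]
    by (simp add: powr_add powr_divide)
  have c2: "X powr ((p - q) / (p - 4)) = Xa * X" unfolding be Xa_def using Xpos by (simp add: powr_add)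
  have "(Xa - Xa * X) * (a / d * Bg + 1/d * (b * Ba)) > 1"
    using cond unfolding c1 c2 unfolding al_def[symmetric] ga_def[symmetric] Xa_def[symmetric] Bg_def[symmetric] .
  then have "(Xa - Xa * X) * (a / d * Bg + 1/d * (b * Ba)) * d > 1 * d" using \<open>d > 0\<close> by (intro mult_strict_right_mono) auto
  moreover have "(Xa - Xa * X) * (a / d * Bg + 1/d * (b * Ba)) * d = (Xa - Xa * X) * (a * Bg + b * Ba)"
    using \<open>d > 0\<close> by (simp add: field_simps)
  ultimately have C: "(Xa - Xa * X) * (a * Bg + b * Ba) > d" by linarith
  have Xga: "X powr ga \<ge> Xa" unfolding Xa_def using gal Xpos X1 by (intro powr_mono') auto
  have "Xa - Xa * X \<le> Xa" using Bgp Xpos by simp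
  then have Xg2: "X powr ga \<ge> Xa - Xa * X" using Xga by linarith
  define u where "u = X * b / c"
  have upos: "u > 0" using assms Xpos by (simp add: u_def)
  define s where "s = u powr (1 / (p - 4))"
  have spos: "s > 0" using upos by (simp add: s_def)
  have sp: "\<And>r. s powr r = u powr (r / (p - 4))" using upos by (simp add: s_def powr_powr)
  have "a * (X powr ga * Bg) + b * ((1 - X) * Xa * Ba) - d \<ge> (Xa - Xa * X) * (a * Bg + b * Ba) - d"
  proof -
    have "a * (X powr ga * Bg) \<ge> a * ((Xa - Xa * X) * Bg)"
      using Xg2 Bgp assms by (intro mult_left_mono mult_right_mono) auto
    then show ?thesis by (simp add: algebra_simps)
  qed
  with C have inner: "a * (X powr ga * Bg) + b * ((1 - X) * Xa * Ba) - d > 0" by linarith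
  have ug: "u powr ga = X powr ga * Bg" unfolding u_def Bg_def using Xpos assms
    by (simp add: powr_mult[symmetric])
  have ua: "u powr al = Xa * Ba" unfolding u_def Ba_def Xa_def using Xpos assms
    by (simp add: powr_mult[symmetric])
  have ub: "u powr (al + 1) = u * (Xa * Ba)" using ua upos by (simp add: powr_add)
  have "c * u = X * b" using assms by (simp add: u_def)
  have inner2: "a * s powr (2-q) + b * s powr (4-q) - c * s powr (p-q) - d > 0"
  proof -
    have "a * s powr (2-q) + b * s powr (4-q) - c * s powr (p-q) - d
        = a * (X powr ga * Bg) + b * (Xa * Ba) - (c * u) * (Xa * Ba) - d"
      unfolding sp ga_def[symmetric] al_def[symmetric] be ug ua ub by (simp add: algebra_simps)
    also have "\<dots> = a * (X powr ga * Bg) + b * ((1 - X) * Xa * Ba) - d"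
      using \<open>c * u = X * b\<close> by (simp add: algebra_simps)
    finally show ?thesis using inner by simp
  qed
  have e: "s powr q * s powr (2-q) = s^2" "s powr q * s powr (4-q) = s^4"
      "s powr q * s powr (p-q) = s powr p"
    using spos pm[of s q "2-q" 2] pm[of s q "4-q" 4] pm[of s q "p-q" p] by simp_all
  have "a*s^2 + b*s^4 - c*s powr p - d*s powr q
      = s powr q * (a * s powr (2-q) + b * s powr (4-q) - c * s powr (p-q) - d)"
    unfolding e[symmetric] by (simp add: algebra_simps)
  also have "\<dots> > 0" using inner2 spos by simp
  finally show ?thesis using spos by blast
qed



lemma large_T:
  fixes a b c d p q :: real
  assumes "a > 0" "b > 0" "c > 0" "d > 0" "p > 4" "q > 0"
  shows "\<exists>T>0. \<forall>t\<ge>T. a*t^2 + b*t^4 - c*t powr p - d*t powr q < 0"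
proof -
  define R where "R = ((a+b)/c) powr (1/(p-4))"
  have R0: "R \<ge> 0" by (simp add: R_def)
  have RR: "R powr (p-4) = (a+b)/c" using assms by (simp add: R_def powr_powr)
  define T where "T = max 1 (R+1)"
  have "\<forall>t\<ge>T. a*t^2 + b*t^4 - c*t powr p - d*t powr q < 0"
  proof (intro allI impI)
    fix t assume tT: "t \<ge> T"
    then have t1: "t \<ge> 1" and tR: "t > R" by (auto simp: T_def)
    have "t^2 \<le> t^4" using t1 by (intro power_increasing) auto
    then have A: "a*t^2 + b*t^4 \<le> (a+b)*t^4" using assms by (simp add: algebra_simps)
    have "R powr (p-4) < t powr (p-4)" using tR R0 assms by (intro powr_less_mono2) auto
    then have "t powr (p-4) > (a+b)/c" using RR by simp
    then have "c * t powr (p-4) > a + b" using assms by (simp add: field_simps)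
    moreover have "t^4 * t powr (p-4) = t powr p" using pm[of t 4 "p-4" p] t1 by simp
    moreover have "t^4 > 0" using t1 by simp
    ultimately have "(a+b) * t^4 < (c * t powr (p-4)) * t^4"
      by (intro mult_strict_right_mono) auto
    also have "\<dots> = c * t powr p" using \<open>t^4 * t powr (p-4) = t powr p\<close>
      by (simp add: mult_ac)
    finally have "c * t powr p > (a+b) * t^4" .
    moreover have "d * t powr q \<ge> 0" using assms by simp
    ultimately show "a*t^2 + b*t^4 - c*t powr p - d*t powr q < 0" using A by linarith
  qed
  moreover have "T > 0" by (simp add: T_def)
  ultimately show ?thesis by blast
qed

lemma small_pt:
  fixes a b c d p q r :: real
  assumes "a > 0" "b > 0" "c > 0" "d > 0" "p > 4" "q > 0" "q < 2" "r > 0"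
  shows "\<exists>s>0. s < r \<and> a*s^2 + b*s^4 - c*s powr p - d*s powr q < 0"
proof -
  define m where "m = (d/(2*(a+b))) powr (1/(2-q))"
  define s where "s = min (r/2) (min 1 m)"
  have m0: "m > 0" using assms by (simp add: m_def)
  have s0: "s > 0" "s < r" "s \<le> 1" "s \<le> m" using assms m0 by (auto simp: s_def)
  have "s powr (2-q) \<le> m powr (2-q)" using s0 assms by (intro powr_mono2) auto
  also have "\<dots> = d/(2*(a+b))" using assms by (simp add: m_def powr_powr)
  finally have sp: "s powr (2-q) \<le> d/(2*(a+b))" .
  have e: "s powr (2-q) * s powr q = s^2" using pm[of s "2-q" q 2] s0 by simp
  have "s^4 \<le> s^2" using s0 by (intro power_decreasing) auto
  then have A: "a*s^2 + b*s^4 \<le> (a+b)*s^2" using assms by (simp add: algebra_simps)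
  have "(a+b)*s^2 = (a+b)*s powr (2-q) * s powr q" using e by simp
  also have "\<dots> \<le> (a+b)*(d/(2*(a+b))) * s powr q" using sp assms
    by (intro mult_right_mono mult_left_mono) auto
  also have "\<dots> = d/2 * s powr q" using assms by (simp add: field_simps)
  finally have B: "(a+b)*s^2 \<le> d/2 * s powr q" .
  have "s powr q > 0" using s0 by simp
  moreover have "c * s powr p \<ge> 0" using assms by simp
  moreover have "d/2 * s powr q < d * s powr q" using assms \<open>s powr q > 0\<close> by simp
  ultimately have "a*s^2 + b*s^4 - c*s powr p - d*s powr q < 0" using A B by linarith
  with s0 show ?thesis by blast
qed



theorem lemma4p3:
  fixes a b c d p q X :: real and f :: "real \<Rightarrow> real"
  assumes "a > 0" "b > 0" "c > 0" "d > 0"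
    and "p > 4" "q > 0" "q < 2"
    and f_def: "\<And>t. t \<ge> 0 \<Longrightarrow> f t = a * t^2 + b * t^4 - c * t powr p - d * t powr q"
    and X_def: "X = 8 * (4 - q) / (p * (p - 2) * (p - q))"
    and cond: "(X powr ((4 - q) / (p - 4)) - X powr ((p - q) / (p - 4))) *
               (a / d * (b / c) powr ((2 - q) / (p - 4))
                + 1 / d * (b powr ((p - q) / (p - 4)) / c powr ((4 - q) / (p - 4)))) > 1"
  shows "(\<exists>t1. strict_local_min_on f {0..} t1 \<and> f t1 < 0) \<and>
         (\<exists>t2. strict_global_max_on f {0..} t2 \<and> f t2 > 0)"
proof -
  define F where "F t = a * t^2 + b * t^4 - c * t powr p - d * t powr q" for t
  define H where "H t = 2*a*t powr (2-q) + 4*b*t powr (4-q) - c*p*t powr (p-q) - d*q" for t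
  define K where "K t = 2*a*(2-q) + 4*b*(4-q)*t^2 - c*p*(p-q)*t powr (p-2)" for t
  have fF: "\<And>t. t \<ge> 0 \<Longrightarrow> f t = F t" using f_def by (simp add: F_def)
  have F0: "F 0 = 0" using assms by (simp add: F_def)
  have Kneg: "\<And>x y. 0 < x \<Longrightarrow> x < y \<Longrightarrow> K x \<le> 0 \<Longrightarrow> K y < 0"
    unfolding K_def using assms by (intro K_prop) auto
  have Hd: "\<And>t. t > 0 \<Longrightarrow> (H has_real_derivative t powr (1-q) * K t) (at t)"
    unfolding H_def K_def by (rule H_deriv)
  have Fd: "\<And>t. t > 0 \<Longrightarrow> (F has_real_derivative t powr (q-1) * H t) (at t)"
    unfolding F_def H_def by (rule F_deriv)
  have noz3: "False" if "0 < x" "x < y" "y < z" "H x = 0" "H y = 0" "H z = 0" for x y z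
    using Hqc[OF Hd Kneg that(1-3)] that by simp
  have critmax: "H t = 0" if "t > 0" "e > 0" "\<forall>y. \<bar>t - y\<bar> < e \<longrightarrow> F y \<le> F t" for t e
  proof -
    have "t powr (q-1) * H t = 0" by (rule DERIV_local_max[OF Fd[OF that(1)] that(2,3)])
    then show ?thesis using that by simp
  qed
  have critmin: "H t = 0" if "t > 0" "e > 0" "\<forall>y. \<bar>t - y\<bar> < e \<longrightarrow> F t \<le> F y" for t e
  proof -
    have "t powr (q-1) * H t = 0" by (rule DERIV_local_min[OF Fd[OF that(1)] that(2,3)])
    then show ?thesis using that by simp
  qed
  have contF: "continuous_on {0..T} F" for T
  proof -
    have cp: "continuous_on {0..T} (\<lambda>t::real. t powr p)"
      using assms by (intro continuous_on_powr') (auto intro: continuous_intros)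
    have cq: "continuous_on {0..T} (\<lambda>t::real. t powr q)"
      using assms by (intro continuous_on_powr') (auto intro: continuous_intros)
    show ?thesis unfolding F_def
      by (intro continuous_on_diff continuous_on_add continuous_on_mult continuous_on_const
            continuous_on_power continuous_on_id cp cq)
  qed
  obtain sx where sx: "sx > 0" "F sx > 0" using pos_point[OF assms(1-7) X_def cond] unfolding F_def by blast
  obtain T where T: "T > 0" "\<And>t. t \<ge> T \<Longrightarrow> F t < 0"
    using large_T[OF assms(1-6)] unfolding F_def by blast
  have sxT: "sx < T"
  proof (rule ccontr)
    assume "\<not> sx < T" then have "F sx < 0" using T(2)[of sx] by simp
    then show False using sx by simp
  qed
  have "\<exists>x\<in>{0..T}. \<forall>y\<in>{0..T}. F y \<le> F x"
    using T(1) by (intro continuous_attains_sup compact_Icc contF) simp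
  then obtain t2 where t2: "t2 \<in> {0..T}" "\<And>y. y \<in> {0..T} \<Longrightarrow> F y \<le> F t2"
    by blast
  have Ft2: "F t2 > 0" using t2(2)[of sx] sx sxT by auto
  have t2p: "t2 > 0" using Ft2 F0 t2(1) by (cases "t2 = 0") auto
  have t2T: "t2 < T"
  proof (rule ccontr)
    assume "\<not> t2 < T" then have "F t2 < 0" using T(2)[of t2] by simp
    then show False using Ft2 by simp
  qed
  have lmax: "\<forall>y. \<bar>x - y\<bar> < min x (T - x) \<longrightarrow> F y \<le> F x"
    if "0 < x" "x < T" "F x = F t2" for x
  proof (intro allI impI)
    fix y assume "\<bar>x - y\<bar> < min x (T - x)"
    then have "y \<in> {0..T}" by (auto simp: abs_if split: if_splits)
    then show "F y \<le> F x" using t2(2)[of y] that(3) by simp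
  qed
  have Ht2: "H t2 = 0" using critmax[OF t2p _ lmax[OF t2p t2T refl]] t2p t2T by simp
  obtain s0 where s0: "s0 > 0" "s0 < t2" "F s0 < 0"
    using small_pt[OF assms(1-7) t2p] unfolding F_def by blast
  have "\<exists>x\<in>{0..t2}. \<forall>y\<in>{0..t2}. F x \<le> F y"
    using t2p by (intro continuous_attains_inf compact_Icc contF) simp
  then obtain t1 where t1: "t1 \<in> {0..t2}" "\<And>y. y \<in> {0..t2} \<Longrightarrow> F t1 \<le> F y"
    by blast
  have Ft1: "F t1 < 0" using t1(2)[of s0] s0 by auto
  have t1p: "t1 > 0" using Ft1 F0 t1(1) by (cases "t1 = 0") auto
  have t12: "t1 < t2" using Ft1 Ft2 t1(1) by (cases "t1 = t2") auto
  have lmin: "\<forall>y. \<bar>x - y\<bar> < min x (t2 - x) \<longrightarrow> F x \<le> F y"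
    if "0 < x" "x < t2" "F x = F t1" for x
  proof (intro allI impI)
    fix y assume "\<bar>x - y\<bar> < min x (t2 - x)"
    then have "y \<in> {0..t2}" by (auto simp: abs_if split: if_splits)
    then show "F x \<le> F y" using t1(2)[of y] that(3) by simp
  qed
  have Ht1: "H t1 = 0" using critmin[OF t1p _ lmin[OF t1p t12 refl]] t1p t12 by simp
  have zeros: "x = t1 \<or> x = t2" if "x > 0" "H x = 0" for x
  proof (rule ccontr)
    assume ne: "\<not> (x = t1 \<or> x = t2)"
    consider "x < t1" | "t1 < x \<and> x < t2" | "t2 < x" using ne by linarith
    then show False
    proof cases
      case 1 then show ?thesis using noz3[of x t1 t2] that Ht1 Ht2 t12 by auto
    next
      case 2 then show ?thesis using noz3[of t1 x t2] that Ht1 Ht2 t1p by auto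
    next
      case 3 then show ?thesis using noz3[of t1 t2 x] that Ht1 Ht2 t1p t12 by auto
    qed
  qed
  have gmax: "strict_global_max_on f {0..} t2"
    unfolding strict_global_max_on_def
  proof (intro conjI ballI impI)
    show "t2 \<in> {0..}" using t2p by simp
    fix x :: real assume x: "x \<in> {0..}" "x \<noteq> t2"
    have "F x < F t2"
    proof (cases "x = 0")
      case True then show ?thesis using F0 Ft2 by simp
    next
      case False
      show ?thesis
      proof (cases "x \<ge> T")
        case True then show ?thesis using T(2)[of x] Ft2 by simp
      next
        case xT: False
        have xp: "x > 0" using False x by simp
        have le: "F x \<le> F t2" using t2(2)[of x] x xT by simp
        show ?thesis
        proof (rule ccontr)
          assume "\<not> F x < F t2"
          then have eq: "F x = F t2" using le by simp
          have "H x = 0" using critmax[OF xp _ lmax[OF xp _ eq]] xp xT by simp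
          then have "x = t1 \<or> x = t2" using zeros xp by simp
          then show False using x eq Ft1 Ft2 by auto
        qed
      qed
    qed
    then show "f x < f t2" using fF x t2p by simp
  qed
  have lmn: "strict_local_min_on f {0..} t1"
    unfolding strict_local_min_on_def
  proof (intro conjI exI[of _ "t2 - t1"] ballI impI)
    show "t1 \<in> {0..}" using t1p by simp
    show "t2 - t1 > 0" using t12 by simp
    fix x :: real assume x: "x \<in> {0..}" "x \<noteq> t1 \<and> \<bar>x - t1\<bar> < t2 - t1"
    have xt2: "x < t2" using x by linarith
    have "F t1 < F x"
    proof (cases "x = 0")
      case True then show ?thesis using F0 Ft1 by simp
    next
      case False
      have xp: "x > 0" using False x by simp
      have le: "F t1 \<le> F x" using t1(2)[of x] x xt2 by simp
      show ?thesis
      proof (rule ccontr)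
        assume "\<not> F t1 < F x"
        then have eq: "F x = F t1" using le by simp
        have "H x = 0" using critmin[OF xp _ lmin[OF xp xt2 eq]] xp xt2 by simp
        then have "x = t1 \<or> x = t2" using zeros xp by simp
        then show False using x xt2 by auto
      qed
    qed
    then show "f t1 < f x" using fF x t1p by simp
  qed
  have "f t1 < 0" using fF[of t1] t1p Ft1 by simp
  moreover have "f t2 > 0" using fF[of t2] t2p Ft2 by simp
  ultimately show ?thesis using gmax lmn by blast
qed


end
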